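(* Let $G$ be a finite simple graph of order $n$ and size $m$ whose adjacency matrix $A(G)$ is non-singular. Let $\mu_1\ge\mu_2$ be the two largest values among $|\lambda_1|,\dots,|\lambda_n|$ (counted with multiplicity), where $\lambda_1,\dots,\lambda_n$ are the eigenvalues of $A(G)$. Then \[\mathcal{E}(G)\geq \mu_1+(n-1)\left(\sqrt{\mu_2^2+2\mu_2\sqrt[n-1]{\frac{|\det A(G)|}{\mu_1}}+\frac{2m-\mu_1^2}{n-1}}-\mu_2\right).\]
   Context: For a finite simple graph $G$, $A(G)$ is its adjacency matrix with eigenvalues $\lambda_1\ge\cdots\ge\lambda_n$, and the energy is $\mathcal{E}(G)=\sum_{i=1}^n|\lambda_i|$. Note $\mu_1=\lambda_1$ and $\mu_2=\max(\lambda_2,-\lambda_n)$. $G$ is non-singular if $A(G)$ is non-singular. *)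

theory Defs
  imports "Jordan_Normal_Form.Char_Poly" "Jordan_Normal_Form.Determinant"
begin

definition simple_graph :: "nat \<Rightarrow> (nat \<Rightarrow> nat \<Rightarrow> bool) \<Rightarrow> bool" where
  "simple_graph n E \<longleftrightarrow> (\<forall>i<n. \<forall>j<n. E i j \<longleftrightarrow> E j i) \<and> (\<forall>i<n. \<not> E i i)"

definition adj_matrix :: "nat \<Rightarrow> (nat \<Rightarrow> nat \<Rightarrow> bool) \<Rightarrow> real mat" where
  "adj_matrix n E = mat n n (\<lambda>(i,j). if E i j then 1 else 0)"

definition graph_size :: "nat \<Rightarrow> (nat \<Rightarrow> nat \<Rightarrow> bool) \<Rightarrow> nat" where
  "graph_size n E = card {{i,j} | i j. i < n \<and> j < n \<and> E i j}"

definition eigenvalue_list :: "real mat \<Rightarrow> real list \<Rightarrow> bool" where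
  "eigenvalue_list A ls \<longleftrightarrow> char_poly A = (\<Prod>a\<leftarrow>ls. [:- a, 1:])"

definition energy_of :: "real list \<Rightarrow> real" where
  "energy_of ls = sum_list (map abs ls)"

definition abs_desc :: "real list \<Rightarrow> real list" where
  "abs_desc ls = rev (sort (map abs ls))"

definition mu1 :: "real list \<Rightarrow> real" where "mu1 ls = abs_desc ls ! 0"
definition mu2 :: "real list \<Rightarrow> real" where "mu2 ls = abs_desc ls ! 1"

end

theory Submission imports Defs "Jordan_Normal_Form.Schur_Decomposition" begin


lemma ln_le1: fixes t :: real assumes "t \<ge> 1" shows "ln t \<le> (t - 1/t)/2"
proof -
  let ?f = "\<lambda>t::real. (t - 1/t)/2 - ln t"
  have "?f 1 \<le> ?f t"
  proof (rule DERIV_nonneg_imp_increasing_open[OF assms])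
    fix x :: real assume x: "1 < x" "x < t"
    have "DERIV ?f x :> (1 + 1/x^2)/2 - 1/x"
      using x by (auto intro!: derivative_eq_intros simp: field_simps power2_eq_square)
    moreover have "(1 + 1/x^2)/2 - 1/x \<ge> 0"
    proof -
      have "(1 + 1/x^2)/2 - 1/x = (1 - 1/x)^2/2"
        using x by (simp add: field_simps power2_eq_square)
      moreover have "(1 - 1/x)^2/2 \<ge> 0" by simp
      ultimately show ?thesis by linarith
    qed
    ultimately show "\<exists>y. DERIV ?f x :> y \<and> y \<ge> 0" by blast
  next
    show "continuous_on {1..t} ?f"
      by (intro continuous_intros) auto
  qed
  then show ?thesis by simp
qed

lemma ln_le2: fixes t :: real assumes "0 < t" "t \<le> 1" shows "ln t \<le> t - 1 - (t-1)^2/2"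
proof -
  let ?f = "\<lambda>t::real. t - 1 - (t-1)^2/2 - ln t"
  have "?f t \<ge> ?f 1"
  proof (rule DERIV_nonpos_imp_decreasing_open[OF assms(2)])
    fix x :: real assume x: "t < x" "x < 1"
    have "DERIV ?f x :> 1 - (x - 1) - 1/x"
      using x assms by (auto intro!: derivative_eq_intros simp: field_simps power2_eq_square)
    moreover have "1 - (x - 1) - 1/x \<le> 0"
    proof -
      have "1 - (x - 1) - 1/x = - ((x-1)^2/x)"
        using x assms by (simp add: field_simps power2_eq_square)
      moreover have "(x-1)^2/x \<ge> 0" using x assms by simp
      ultimately show ?thesis by linarith
    qed
    ultimately show "\<exists>y. DERIV ?f x :> y \<and> y \<le> 0" by blast
  next
    show "continuous_on {t..1} ?f"
      using assms by (intro continuous_intros) auto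
  qed
  then show ?thesis by simp
qed

lemma pointwise: fixes x a M :: real
  assumes "0 < x" "0 < a" "x \<le> M" "a \<le> M"
  shows "(x - a)^2 \<le> 2*M*(x - a - a * ln (x/a))"
proof (cases "x \<ge> a")
  case True
  have "ln (x/a) \<le> (x/a - 1/(x/a))/2" using True assms by (intro ln_le1) auto
  hence "a * ln (x/a) \<le> a * ((x/a - 1/(x/a))/2)" using assms by (intro mult_left_mono) auto
  also have "\<dots> = (x - a^2/x)/2" using assms by (simp add: field_simps power2_eq_square)
  finally have h: "x - a - a * ln (x/a) \<ge> (x-a)^2/(2*x)"
    using assms by (simp add: field_simps power2_eq_square)
  have "(x-a)^2 = 2*x * ((x-a)^2/(2*x))" using assms by simp
  also have "\<dots> \<le> 2*M * ((x-a)^2/(2*x))" using assms by (intro mult_right_mono) auto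
  also have "\<dots> \<le> 2*M*(x - a - a * ln (x/a))" using assms h by (intro mult_left_mono) auto
  finally show ?thesis .
next
  case False
  have "ln (x/a) \<le> x/a - 1 - (x/a-1)^2/2" using False assms by (intro ln_le2) auto
  hence "a * ln (x/a) \<le> a * (x/a - 1 - (x/a-1)^2/2)" using assms by (intro mult_left_mono) auto
  also have "\<dots> = x - a - (x-a)^2/(2*a)" using assms by (simp add: field_simps power2_eq_square)
  finally have h: "x - a - a * ln (x/a) \<ge> (x-a)^2/(2*a)" by simp
  have "(x-a)^2 = 2*a * ((x-a)^2/(2*a))" using assms by simp
  also have "\<dots> \<le> 2*M * ((x-a)^2/(2*a))" using assms by (intro mult_right_mono) auto
  also have "\<dots> \<le> 2*M*(x - a - a * ln (x/a))" using assms h by (intro mult_left_mono) auto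
  finally show ?thesis .
qed

lemma CF:
  fixes f :: "nat \<Rightarrow> real" and k :: nat and M S Q g :: real
  assumes k: "k \<ge> 1" and pos: "\<And>i. i < k \<Longrightarrow> 0 < f i" and le: "\<And>i. i < k \<Longrightarrow> f i \<le> M"
  defines "S \<equiv> (\<Sum>i<k. f i)" and "Q \<equiv> (\<Sum>i<k. (f i)^2)" and "g \<equiv> root k (\<Prod>i<k. f i)"
  shows "Q - S^2/k \<le> 2*M*(S - k*g)"
proof -
  have Ppos: "(\<Prod>i<k. f i) > 0" using pos by (intro prod_pos) auto
  have gpos: "g > 0" unfolding g_def using Ppos k by simp
  have gk: "g^k = (\<Prod>i<k. f i)" unfolding g_def using Ppos k by simp
  have "(\<Prod>i<k. f i) \<le> (\<Prod>i<k. M)" using pos le by (intro prod_mono) (auto simp: less_imp_le)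
  hence "g \<le> root k (M^k)" unfolding g_def using k by (intro real_root_le_mono) auto
  also have "root k (M^k) = M" using k pos[of 0] le[of 0] by (intro real_root_power_cancel) auto
  finally have gM: "g \<le> M" .
  have lnsum: "(\<Sum>i<k. ln (f i / g)) = 0"
  proof -
    have "(\<Sum>i<k. ln (f i / g)) = (\<Sum>i<k. ln (f i) - ln g)"
      using pos gpos by (intro sum.cong) (auto simp: ln_div less_imp_neq[symmetric])
    also have "\<dots> = (\<Sum>i<k. ln (f i)) - k * ln g" by (simp add: sum_subtractf)
    also have "(\<Sum>i<k. ln (f i)) = ln (\<Prod>i<k. f i)" using pos by (subst ln_prod) (auto, metis less_irrefl pos)
    also have "\<dots> = k * ln g" using gk gpos by (metis ln_realpow)
    finally show ?thesis by simp
  qed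
  have inner: "(\<Sum>i<k. (f i - g - g * ln (f i/g))) = S - k*g - g * (\<Sum>i<k. ln (f i / g))"
    unfolding S_def by (simp add: sum_subtractf sum_distrib_left)
  have "(\<Sum>i<k. (f i - g)^2) \<le> (\<Sum>i<k. 2*M*(f i - g - g * ln (f i/g)))"
    using pos le gpos gM by (intro sum_mono pointwise) auto
  also have "\<dots> = 2*M*(\<Sum>i<k. (f i - g - g * ln (f i/g)))"
    by (rule sum_distrib_left[symmetric])
  also have "2*M*(\<Sum>i<k. (f i - g - g * ln (f i/g))) = 2*M*(S - k*g - g * (\<Sum>i<k. ln (f i / g)))"
    by (simp only: inner)
  also have "\<dots> = 2*M*(S - k*g)" using lnsum by simp
  finally have A: "(\<Sum>i<k. (f i - g)^2) \<le> 2*M*(S - k*g)" .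
  have B: "(\<Sum>i<k. (f i - g)^2) = Q - 2*g*S + k*g^2"
  proof -
    have "(\<Sum>i<k. (f i - g)^2) = (\<Sum>i<k. ((f i)^2 - (2*g) * f i + g^2))"
      by (intro sum.cong refl) (simp add: power2_diff)
    also have "\<dots> = (\<Sum>i<k. (f i)^2) - (2*g) * (\<Sum>i<k. f i) + k*g^2"
      by (simp add: sum.distrib sum_subtractf sum_distrib_left)
    finally show ?thesis unfolding Q_def S_def .
  qed
  have C: "k*g^2 - 2*g*S + S^2/k \<ge> 0"
  proof -
    have "k*g^2 - 2*g*S + S^2/k = (k*g - S)^2/k" using k by (simp add: field_simps power2_eq_square)
    thus ?thesis by simp
  qed
  show ?thesis using A B C by linarith
qed



definition tr :: "nat \<Rightarrow> real mat \<Rightarrow> real" where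
  "tr n X = (\<Sum>i<n. X $$ (i,i))"

lemma mult_idx: assumes "X \<in> carrier_mat n n" "Y \<in> carrier_mat n n" "i < n" "j < n"
  shows "(X*Y) $$ (i,j) = (\<Sum>k<n. X $$ (i,k) * Y $$ (k,j))"
  using assms by (auto simp: scalar_prod_def atLeast0LessThan intro!: sum.cong)

lemma tr_comm: assumes "X \<in> carrier_mat n n" "Y \<in> carrier_mat n n"
  shows "tr n (X*Y) = tr n (Y*X)"
proof -
  have "tr n (X*Y) = (\<Sum>i<n. \<Sum>k<n. X $$ (i,k) * Y $$ (k,i))"
    unfolding tr_def using assms by (intro sum.cong refl mult_idx[OF assms]) auto
  also have "\<dots> = (\<Sum>k<n. \<Sum>i<n. Y $$ (k,i) * X $$ (i,k))"
    by (subst sum.swap) (simp add: mult.commute)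
  also have "\<dots> = tr n (Y*X)"
    unfolding tr_def using assms by (intro sum.cong refl mult_idx[OF assms(2,1), symmetric]) auto
  finally show ?thesis .
qed

lemma eig_facts:
  assumes A: "A \<in> carrier_mat n n" and c: "char_poly A = (\<Prod>a\<leftarrow>ls. [:- a, 1:])"
  shows "length ls = n" "det A = prod_list ls" "tr n (A*A) = sum_list (map (\<lambda>x. x^2) ls)"
proof -
  obtain B P Q where s: "schur_decomposition A ls = (B,P,Q)" by (metis prod_cases3)
  from schur_decomposition[OF A c s] have sim: "similar_mat_wit A B P Q"
    and ut: "upper_triangular B" and dg: "diag_mat B = ls" by auto
  from similar_mat_witD2[OF A sim] have PQ: "P * Q = 1\<^sub>m n" and QP: "Q * P = 1\<^sub>m n"
    and AB: "A = P * B * Q" and Bc: "B \<in> carrier_mat n n" and Pc: "P \<in> carrier_mat n n"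
    and Qc: "Q \<in> carrier_mat n n" by auto
  show "length ls = n" using dg[symmetric] Bc by (simp add: diag_mat_def)
  have "det A = det P * det B * det Q" using AB Pc Bc Qc by (simp add: det_mult)
  also have "det P * det Q = 1" using PQ Pc Qc by (metis det_mult det_one)
  hence "det P * det B * det Q = det B" by (metis mult.commute mult.left_commute mult_1)
  also have "det B = prod_list ls" using det_upper_triangular[OF ut Bc] dg by simp
  finally show "det A = prod_list ls" .
  have "A ^\<^sub>m 2 = P * B ^\<^sub>m 2 * Q" by (rule similar_mat_wit_pow_id[OF sim])
  hence AA: "A * A = P * (B * B) * Q" using A Bc by (simp add: numeral_2_eq_2)
  have "tr n (A*A) = tr n (Q * (P * (B * B)))" unfolding AA
    using Pc Qc Bc by (intro tr_comm) auto
  also have "Q * (P * (B * B)) = (Q * P) * (B * B)"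
    using Pc Qc Bc by (intro assoc_mult_mat[symmetric]) auto
  also have "\<dots> = B * B" unfolding QP using Bc by simp
  also have "tr n (B * B) = (\<Sum>i<n. (B $$ (i,i))^2)"
    unfolding tr_def
  proof (intro sum.cong refl)
    fix i assume i: "i \<in> {..<n}"
    have "(B*B) $$ (i,i) = (\<Sum>k<n. B $$ (i,k) * B $$ (k,i))" by (rule mult_idx[OF Bc Bc]) (use i in auto)
    also have "\<dots> = (\<Sum>k\<in>{i}. B $$ (i,k) * B $$ (k,i))"
    proof (rule sum.mono_neutral_right)
      show "\<forall>k\<in>{..<n} - {i}. B $$ (i, k) * B $$ (k, i) = 0"
      proof
        fix k assume k: "k \<in> {..<n} - {i}"
        show "B $$ (i, k) * B $$ (k, i) = 0"
        proof (cases "k < i")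
          case True thus ?thesis using ut Bc i by (auto simp: upper_triangular_def)
        next
          case False hence "i < k" using k by auto
          thus ?thesis using ut Bc k by (auto simp: upper_triangular_def)
        qed
      qed
    qed (use i in auto)
    finally show "(B*B) $$ (i,i) = (B $$ (i,i))^2" by (simp add: power2_eq_square)
  qed
  also have "\<dots> = sum_list (map (\<lambda>x. x^2) ls)" unfolding dg[symmetric] diag_mat_def
    using Bc by (simp add: sum_list_sum_nth atLeast0LessThan)
  finally show "tr n (A*A) = sum_list (map (\<lambda>x. x^2) ls)" .
qed



lemma adj_carrier: "adj_matrix n E \<in> carrier_mat n n"
  by (simp add: adj_matrix_def)

lemma card_ordered_pairs:
  assumes g: "simple_graph n E"
  shows "card {(i,j). i < n \<and> j < n \<and> E i j} = 2 * graph_size n E"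
proof -
  let ?D = "{(i,j). i < n \<and> j < n \<and> E i j}"
  let ?D1 = "{(i,j). i < n \<and> j < n \<and> E i j \<and> i < j}"
  let ?D2 = "{(i,j). i < n \<and> j < n \<and> E i j \<and> j < i}"
  have sym: "\<And>i j. i < n \<Longrightarrow> j < n \<Longrightarrow> E i j = E j i" and irr: "\<And>i. i < n \<Longrightarrow> \<not> E i i"
    using g unfolding simple_graph_def by auto
  have fin1: "finite ?D1" by (rule finite_subset[of _ "{..<n} \<times> {..<n}"]) auto
  have fin2: "finite ?D2" by (rule finite_subset[of _ "{..<n} \<times> {..<n}"]) auto
  have D: "?D = ?D1 \<union> ?D2" using irr by (auto simp: linorder_neq_iff) (metis nat_neq_iff)
  have "card ?D = card ?D1 + card ?D2" unfolding D by (rule card_Un_disjoint[OF fin1 fin2]) auto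
  moreover have "?D2 = (\<lambda>(i,j). (j,i)) ` ?D1" using sym by (auto simp: image_iff)
  hence "card ?D2 = card ?D1" by (simp add: card_image inj_on_def)
  moreover have "{{i,j} | i j. i < n \<and> j < n \<and> E i j} = (\<lambda>(i,j). {i,j}) ` ?D1"
  proof (intro equalityI subsetI)
    fix e assume "e \<in> {{i,j} | i j. i < n \<and> j < n \<and> E i j}"
    then obtain i j where e: "e = {i,j}" "i < n" "j < n" "E i j" by auto
    have "i \<noteq> j" using e irr by auto
    show "e \<in> (\<lambda>(i,j). {i,j}) ` ?D1"
    proof (cases "i < j")
      case True thus ?thesis using e by (intro image_eqI[of _ _ "(i,j)"]) auto
    next
      case False hence "j < i" using \<open>i \<noteq> j\<close> by auto
      thus ?thesis using e sym[of i j] by (intro image_eqI[of _ _ "(j,i)"]) auto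
    qed
  qed auto
  moreover have "inj_on (\<lambda>(i,j). {i,j}) ?D1"
    by (auto simp: inj_on_def doubleton_eq_iff)
  ultimately show ?thesis unfolding graph_size_def by (simp add: card_image)
qed

lemma tr_adj:
  assumes g: "simple_graph n E"
  shows "tr n (adj_matrix n E * adj_matrix n E) = 2 * real (graph_size n E)"
proof -
  let ?A = "adj_matrix n E"
  have sym: "\<And>i j. i < n \<Longrightarrow> j < n \<Longrightarrow> E i j = E j i"
    using g unfolding simple_graph_def by auto
  have "tr n (?A * ?A) = (\<Sum>i<n. \<Sum>k<n. ?A $$ (i,k) * ?A $$ (k,i))"
    unfolding tr_def by (intro sum.cong refl mult_idx[OF adj_carrier adj_carrier]) auto
  also have "\<dots> = (\<Sum>i<n. \<Sum>k<n. if E i k then 1 else 0)"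
    by (intro sum.cong refl) (auto simp: adj_matrix_def sym)
  also have "\<dots> = (\<Sum>p\<in>{..<n} \<times> {..<n}. if E (fst p) (snd p) then 1 else 0)"
    by (simp add: sum.cartesian_product case_prod_beta)
  also have "\<dots> = real (card ({..<n} \<times> {..<n} \<inter> {p. E (fst p) (snd p)}))"
    by (simp add: sum.If_cases)
  also have "{..<n} \<times> {..<n} \<inter> {p. E (fst p) (snd p)} = {(i,j). i < n \<and> j < n \<and> E i j}"
    by auto
  finally show ?thesis using card_ordered_pairs[OF g] by simp
qed



lemma abs_desc_props:
  shows "mset (abs_desc ls) = mset (map abs ls)" "length (abs_desc ls) = length ls"
    and "\<And>i j. i \<le> j \<Longrightarrow> j < length ls \<Longrightarrow> abs_desc ls ! j \<le> abs_desc ls ! i"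
proof -
  show "mset (abs_desc ls) = mset (map abs ls)" by (simp add: abs_desc_def)
  show "length (abs_desc ls) = length ls" by (simp add: abs_desc_def)
  have "sorted_wrt (\<ge>) (abs_desc ls)" unfolding abs_desc_def sorted_wrt_rev by simp
  fix i j assume "i \<le> j" "j < length ls"
  thus "abs_desc ls ! j \<le> abs_desc ls ! i"
    using \<open>sorted_wrt (\<ge>) (abs_desc ls)\<close>
    by (cases "i = j") (auto simp: sorted_wrt_iff_nth_less abs_desc_def)
qed

lemma prod_list_abs: "prod_list (map abs xs) = \<bar>prod_list xs\<bar>" for xs :: "real list"
  by (induct xs) (auto simp: abs_mult)

theorem theorem3p2:
  fixes n :: nat and E :: "nat \<Rightarrow> nat \<Rightarrow> bool" and ls :: "real list"
  assumes "simple_graph n E"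
    and "n \<ge> 1"
    and "det (adj_matrix n E) \<noteq> 0"
    and "eigenvalue_list (adj_matrix n E) ls"
  shows "energy_of ls \<ge> mu1 ls + real (n - 1) *
      (sqrt ((mu2 ls)^2 + 2 * mu2 ls * root (n - 1) (\<bar>det (adj_matrix n E)\<bar> / mu1 ls)
             + (2 * real (graph_size n E) - (mu1 ls)^2) / real (n - 1)) - mu2 ls)"
proof -
  note ef = eig_facts[OF adj_carrier assms(4)[unfolded eigenvalue_list_def]]
  define xs where "xs = abs_desc ls"
  have len: "length xs = n" using ef(1) abs_desc_props(2) xs_def by simp
  have ms: "mset xs = mset (map abs ls)" using abs_desc_props(1) xs_def by simp
  have mono: "\<And>i j. i \<le> j \<Longrightarrow> j < n \<Longrightarrow> xs ! j \<le> xs ! i"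
    using abs_desc_props(3) ef(1) xs_def by simp
  have en: "energy_of ls = sum_list xs" unfolding energy_of_def
    by (metis ms sum_mset_sum_list)
  have "prod_list ls \<noteq> 0" using assms(3) ef(2) by simp
  hence "0 \<notin> set ls" by (simp add: prod_list_zero_iff)
  hence pos: "\<And>x. x \<in> set xs \<Longrightarrow> x > 0"
  proof -
    fix x assume "x \<in> set xs"
    hence "x \<in> set (map abs ls)" using ms by (metis mset_eq_setD)
    thus "x > 0" using \<open>0 \<notin> set ls\<close> by auto
  qed
  have dt: "\<bar>det (adj_matrix n E)\<bar> = prod_list xs"
    using ef(2) by (metis ms prod_list_abs prod_mset_prod_list)
  have sq: "2 * real (graph_size n E) = sum_list (map (\<lambda>x. x^2) xs)"
  proof -
    have "mset (map (\<lambda>x. x^2) xs) = mset (map (\<lambda>x. x^2) (map abs ls))" using ms by (metis mset_map)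
    hence "sum_list (map (\<lambda>x. x^2) xs) = sum_list (map (\<lambda>x. x^2) (map abs ls))"
      by (metis sum_mset_sum_list)
    also have "\<dots> = sum_list (map (\<lambda>x. x^2) ls)" by (simp add: o_def)
    finally show ?thesis using ef(3) tr_adj[OF assms(1)] by simp
  qed
  obtain x0 ys where xs: "xs = x0 # ys" using len assms(2) by (cases xs) auto
  have m1: "mu1 ls = x0" unfolding mu1_def xs_def[symmetric] xs by simp
  have x0: "x0 > 0" using pos xs by simp
  have ysl: "length ys = n - 1" using len xs by simp
  show ?thesis
  proof (cases "n = 1")
    case True
    have "sum_list ys \<ge> 0" using pos xs by (intro sum_list_nonneg) (auto intro: less_imp_le)
    thus ?thesis using True en m1 xs by simp
  next
    case False
    define k where "k = n - 1"
    have k: "k \<ge> 1" using False assms(2) k_def by simp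
    define f where "f i = ys ! i" for i
    define M where "M = mu2 ls"
    have M: "M = f 0" unfolding M_def mu2_def xs_def[symmetric] xs f_def by simp
    have fpos: "\<And>i. i < k \<Longrightarrow> 0 < f i" using pos xs ysl k_def f_def by simp
    have fle: "\<And>i. i < k \<Longrightarrow> f i \<le> M"
    proof -
      fix i assume i: "i < k"
      have "xs ! (Suc i) \<le> xs ! 1" using mono[of 1 "Suc i"] i k_def by simp
      thus "f i \<le> M" unfolding M f_def xs by simp
    qed
    define S where "S = (\<Sum>i<k. f i)"
    define Q where "Q = (\<Sum>i<k. (f i)^2)"
    define g where "g = root k (\<Prod>i<k. f i)"
    have cf: "Q - S^2/k \<le> 2*M*(S - k*g)"
      unfolding S_def Q_def g_def by (rule CF[OF k fpos fle])
    have Sy: "sum_list ys = S" unfolding S_def f_def using ysl k_def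
      by (simp add: sum_list_sum_nth atLeast0LessThan)
    have Qy: "sum_list (map (\<lambda>x. x^2) ys) = Q" unfolding Q_def f_def using ysl k_def
      by (simp add: sum_list_sum_nth atLeast0LessThan)
    have Py: "prod_list ys = (\<Prod>i<k. f i)"
    proof -
      have "prod_list ys = (\<Prod>i\<in>{0..<length ys}. ys ! i)"
        by (rule prod.list_conv_set_nth)
      thus ?thesis unfolding f_def using ysl k_def by (simp add: atLeast0LessThan)
    qed
    have e1: "energy_of ls = x0 + S" using en xs Sy by simp
    have e2: "\<bar>det (adj_matrix n E)\<bar> / mu1 ls = (\<Prod>i<k. f i)" using dt xs m1 x0 Py by simp
    have e3: "(2 * real (graph_size n E) - (mu1 ls)^2) / real k = Q / k"
      using sq xs m1 Qy k_def by simp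
    have e2': "root k (\<bar>det (adj_matrix n E)\<bar> / mu1 ls) = g" using e2 g_def by simp
    have Mnn: "M \<ge> 0" using fpos[of 0] fle[of 0] k by simp
    have Snn: "S \<ge> 0" unfolding S_def using fpos by (intro sum_nonneg) (auto intro: less_imp_le)
    have kpos: "real k > 0" using k by simp
    have key: "M^2 + 2*M*g + Q/k \<le> (S/k + M)^2"
    proof -
      have "Q/k - S^2/k^2 \<le> 2*M*S/k - 2*M*g"
      proof -
        have "(Q - S^2/k)/k \<le> (2*M*(S - k*g))/k" using cf kpos by (simp add: divide_right_mono)
        thus ?thesis using kpos by (simp add: field_simps power2_eq_square)
      qed
      thus ?thesis using kpos by (simp add: field_simps power2_eq_square)
    qed
    have "sqrt (M^2 + 2*M*g + Q/k) \<le> sqrt ((S/k + M)^2)"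
      using key by (rule real_sqrt_le_mono)
    also have "\<dots> = S/k + M" using Snn Mnn kpos by simp
    finally have "sqrt (M^2 + 2*M*g + Q/k) \<le> S/k + M" .
    hence "real k * (sqrt (M^2 + 2*M*g + Q/k) - M) \<le> real k * (S/k)"
      using kpos by (intro mult_left_mono) auto
    also have "\<dots> = S" using kpos by simp
    finally have fin: "real k * (sqrt (M^2 + 2*M*g + Q/k) - M) \<le> S" .
    show ?thesis unfolding k_def[symmetric] M_def[symmetric] e2' e3
      using fin e1 m1 by simp
  qed
qed


end
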